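(* For integers $0\le r\le m$ with $m\ge1$ and $k\ge1$, the rates of $\mathrm{RM}(r,m)$ and $\mathrm{RM}(r,m+k)$ satisfy $$R(r,m)-R(r,m+k)\le\frac{3k+4}{5\sqrt m}.$$
   Context: The rate of the Reed--Muller code $\mathrm{RM}(r,m)$ is $R(r,m)=2^{-m}\sum_{i=0}^{r}\binom{m}{i}$. *)

theory Defs
  imports Complex_Main
begin

definition RM_rate :: "nat \<Rightarrow> nat \<Rightarrow> real" where
  "RM_rate r m = (\<Sum>i\<le>r. real (m choose i)) / 2 ^ m"

end

theory Submission
  imports Defs
begin

lemma alg_nat: "(2*t+2) * (Y::nat) = X * (t+1) \<Longrightarrow> (2*t+1) * Z = Y * (t+1) \<Longrightarrow> X * (t+1) = 2*(2*t+1) * Z"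
proof -
  assume h1: "(2*t+2) * (Y::nat) = X * (t+1)" and h2: "(2*t+1) * Z = Y * (t+1)"
  have "X * (t+1) = 2 * (Y * (t+1))" using h1 by (simp add: algebra_simps)
  also have "\<dots> = 2*(2*t+1) * Z" using h2 by (simp add: algebra_simps)
  finally show ?thesis .
qed

lemma central_rec: "((2*t+2) choose (t+1)) * (t+1) = 2*(2*t+1) * ((2*t) choose t)"
proof -
  have a: "(2*t+2) * ((2*t+1) choose t) = ((2*t+2) choose (t+1)) * (t+1)"
    using Suc_times_binomial_eq[of "2*t+1" t] by (simp only: Suc_eq_plus1 add.assoc one_add_one)
  have b: "(2*t+1) * ((2*t) choose t) = ((2*t+1) choose (t+1)) * (t+1)"
    using Suc_times_binomial_eq[of "2*t" t] by (simp only: Suc_eq_plus1)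
  have d: "2*t+1-t = t+1" by simp
  have c: "(2*t+1) choose t = (2*t+1) choose (t+1)"
  proof -
    have "t \<le> 2*t+1" by simp
    from binomial_symmetric[OF this] show ?thesis unfolding d .
  qed
  show ?thesis using alg_nat[OF a[unfolded c] b] .
qed

lemma odd_rec: "((2*t+1) choose t) * (t+1) = (2*t+1) * ((2*t) choose t)"
proof -
  have b: "(2*t+1) * ((2*t) choose t) = ((2*t+1) choose (t+1)) * (t+1)"
    using Suc_times_binomial_eq[of "2*t" t] by (simp only: Suc_eq_plus1)
  have d: "2*t+1-t = t+1" by simp
  have c: "(2*t+1) choose t = (2*t+1) choose (t+1)"
  proof -
    have "t \<le> 2*t+1" by simp
    from binomial_symmetric[OF this] show ?thesis unfolding d .
  qed
  show ?thesis using b c by simp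
qed

lemma alg_e: "(2*(2*t+1) * (Z::real) / (t+1)) / (4 * q) = (Z / q) * (2*t+1) / (2*t+2)" if "q > 0" "t \<ge> 0"
proof -
  have a: "t+1 > 0" "2*t+2 > 0" using that by auto
  show ?thesis using that a by (simp add: divide_simps) (simp add: algebra_simps)
qed

lemma alg_o: "(2*t+1) * (Z::real) / (t+1) / (2 * q) = (Z / q) * ((2*t+1) / (2*t+2))" if "q > 0" "t \<ge> 0"
proof -
  have "2*t+2 = 2*(t+1)" by simp
  then show ?thesis using that by (simp add: field_simps)
qed

lemma div_of: "x*(t+1) = (y::real) \<Longrightarrow> x = y/(t+1)" if "t \<ge> 0"
  using that by (simp add: field_simps)

lemma central_bound: "(real ((2*t) choose t) / 4^t)^2 * (3*t+1) \<le> 1"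
proof (induction t)
  case 0 then show ?case by simp
next
  case (Suc t)
  define a where "a = real ((2*t) choose t) / 4^t"
  have c0: "real ((2*t+2) choose (t+1)) * (real t+1) = 2*(2*real t+1) * real ((2*t) choose t)"
    using arg_cong[OF central_rec[of t], of real] by (simp only: of_nat_mult of_nat_add of_nat_1 of_nat_numeral)
  have rec: "real ((2*t+2) choose (t+1)) = 2*(2*real t+1) * real ((2*t) choose t) / (real t+1)"
    using div_of[OF _ c0] by simp
  have e: "real ((2*Suc t) choose Suc t) / 4^Suc t = a * (2*real t+1) / (2*real t+2)"
  proof -
    have q: "2*Suc t = 2*t+2" "Suc t = t+1" by simp_all
    have p: "(4::real)^Suc t = 4*4^t" by simp
    have "real ((2*Suc t) choose Suc t) / 4^Suc t = (2*(2*real t+1) * real ((2*t) choose t) / (real t+1)) / (4 * 4^t)"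
      unfolding p unfolding q(1) unfolding q(2) unfolding rec ..
    also have "\<dots> = a * (2*real t+1) / (2*real t+2)" unfolding a_def by (rule alg_e) auto
    finally show ?thesis .
  qed
  have ih: "a^2 * (3*real t+1) \<le> 1" using Suc.IH by (simp add: a_def add.commute)
  have poly: "(2*real t+1)^2*(3*real t+4) \<le> (2*real t+2)^2*(3*real t+1)"
    by (simp add: power2_eq_square algebra_simps)
  have nz: "(2*real t+2)^2 \<noteq> 0" by simp
  have "(a * (2*real t+1) / (2*real t+2))^2 * (3*real t+4) = a^2 * ((2*real t+1)^2*(3*real t+4)) / (2*real t+2)^2"
    by (simp add: power_divide power_mult_distrib)
  also have "\<dots> \<le> a^2 * ((2*real t+2)^2*(3*real t+1)) / (2*real t+2)^2"
    by (intro divide_right_mono mult_left_mono poly) auto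
  also have "\<dots> = a^2 * (3*real t+1)"
    using nz by (simp only: mult.assoc[symmetric] mult.commute[of _ "(2*real t+2)^2"]) (simp add: mult.assoc)
  also have "\<dots> \<le> 1" by (rule ih)
  finally have "(real ((2*Suc t) choose Suc t) / 4^Suc t)^2 * (3*real t+4) \<le> 1" unfolding e .
  moreover have "real (3 * Suc t + 1) = 3*real t+4" by simp
  ultimately show ?case by (simp add: add.commute)
qed

lemma binom_bound:
  assumes "n \<ge> 1"
  shows "real (n choose r) / 2^n \<le> 6 / (5 * sqrt n)"
proof -
  obtain t where t: "n = 2*t \<or> n = 2*t+1" by (metis dvd_mult_div_cancel odd_two_times_div_two_succ)
  define a where "a = real ((2*t) choose t) / 4^t"
  have a0: "a \<ge> 0" by (simp add: a_def)
  have ab: "a^2 * (3*t+1) \<le> 1" using central_bound[of t] by (simp add: a_def)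
  have mx: "real (n choose r) \<le> real (n choose (n div 2))"
    using binomial_maximum by simp
  have "real (n choose r) / 2^n \<le> a"
    using t
  proof
    assume n: "n = 2*t"
    have "real (n choose (n div 2)) / 2^n = a" using n by (simp add: a_def power_mult)
    then show ?thesis using mx divide_right_mono[OF mx, of "2^n"] by simp
  next
    assume n: "n = 2*t+1"
    have d: "n div 2 = t" using n by simp
    have o: "real ((2*t+1) choose t) * (real t+1) = (2*real t+1) * real ((2*t) choose t)"
      using arg_cong[OF odd_rec[of t], of real] by (simp only: of_nat_mult of_nat_add of_nat_1 of_nat_numeral)
    have o2: "real ((2*t+1) choose t) = (2*real t+1) * real ((2*t) choose t) / (real t+1)"
      using div_of[OF _ o] by simp
    have p: "(2::real)^n = 2 * 4^t" using n by (simp add: power_mult power_add)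
    have "real (n choose (n div 2)) / 2^n = (2*real t+1) * real ((2*t) choose t) / (real t+1) / (2 * 4^t)"
      using o2 p d n by simp
    also have "\<dots> = a * ((2*real t+1) / (2*real t+2))" unfolding a_def by (rule alg_o) auto
    finally have "real (n choose (n div 2)) / 2^n = a * ((2*real t+1) / (2*real t+2))" .
    also have "\<dots> \<le> a" using a0 by (intro mult_left_le) auto
    finally show ?thesis using mx by (smt (verit) divide_right_mono zero_le_power)
  qed
  moreover have "a \<le> 6 / (5 * sqrt n)"
  proof -
    have "(a * sqrt n)^2 \<le> (6/5)^2"
    proof -
      have "(a * sqrt n)^2 = a^2 * n" using a0 by (simp add: power_mult_distrib)
      also have "\<dots> \<le> a^2 * ((36/25) * (3*t+1))" using t
        by (intro mult_left_mono) auto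
      also have "\<dots> \<le> 36/25" using ab by (simp add: algebra_simps)
      finally show ?thesis by (simp add: power2_eq_square)
    qed
    then have "a * sqrt n \<le> 6/5"
      by (rule power2_le_imp_le) auto
    moreover have "sqrt n > 0" using assms by simp
    ultimately show ?thesis by (simp add: field_simps)
  qed
  ultimately show ?thesis by linarith
qed

lemma sum_step: "(\<Sum>i\<le>r. real (Suc n choose i)) = 2 * (\<Sum>i\<le>r. real (n choose i)) - real (n choose r)"
proof (induction r)
  case 0 then show ?case by simp
next
  case (Suc r) then show ?case by simp
qed

lemma rate_step: "RM_rate r n - RM_rate r (Suc n) = real (n choose r) / 2^(Suc n)"
  unfolding RM_rate_def sum_step by (simp add: field_simps)

lemma rate_diff:
  assumes "m \<ge> 1"
  shows "RM_rate r m - RM_rate r (m + k) \<le> 3 * real k / (5 * sqrt m)"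
proof (induction k)
  case 0 then show ?case by simp
next
  case (Suc k)
  have "real ((m+k) choose r) / 2^(m+k) \<le> 6 / (5 * sqrt (m+k))"
    using binom_bound[of "m+k" r] assms by simp
  also have "\<dots> \<le> 6 / (5 * sqrt m)"
    using assms by (intro divide_left_mono mult_left_mono) auto
  finally have "real ((m+k) choose r) / 2^(m+k) / 2 \<le> 6 / (5 * sqrt m) / 2" by (rule divide_right_mono) simp
  moreover have "RM_rate r (m+k) - RM_rate r (m + Suc k) = real ((m+k) choose r) / 2^(m+k) / 2"
    using rate_step[of r "m+k"] by simp
  moreover have "6 / (5 * sqrt m) / 2 = 3 / (5 * sqrt m)" by simp
  ultimately have st: "RM_rate r (m+k) - RM_rate r (m + Suc k) \<le> 3 / (5 * sqrt m)"
    by simp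
  have "RM_rate r m - RM_rate r (m + Suc k) = (RM_rate r m - RM_rate r (m+k)) + (RM_rate r (m+k) - RM_rate r (m + Suc k))"
    by simp
  also have "\<dots> \<le> 3 * real k / (5 * sqrt m) + 3 / (5 * sqrt m)"
    by (rule add_mono[OF Suc.IH st])
  finally have "RM_rate r m - RM_rate r (m + Suc k) \<le> 3 * real k / (5 * sqrt m) + 3 / (5 * sqrt m)" .
  moreover have eq4: "3 * real (Suc k) / (5 * sqrt m) = 3 * real k / (5 * sqrt m) + 3 / (5 * sqrt m)"
    by (simp add: add_divide_distrib[symmetric] algebra_simps)
  ultimately show ?case by (simp only: eq4)
qed

theorem lemma8:
  fixes r m k :: nat
  assumes "r \<le> m" and "m \<ge> 1" and "k \<ge> 1"
  shows "RM_rate r m - RM_rate r (m + k) \<le> (3 * real k + 4) / (5 * sqrt (real m))"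
proof -
  have "3 * real k / (5 * sqrt m) \<le> (3 * real k + 4) / (5 * sqrt (real m))"
    using assms by (intro divide_right_mono) auto
  then show ?thesis using rate_diff[OF assms(2), of r k] by linarith
qed

end
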